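(* Let $s\in\mathbb{N}$ and let $g:\mathbb{N}\to\mathbb{C}$ be an additive arithmetical function. Suppose that for every prime $p$ the series $\sum_{v=1}^{\infty}\frac{g(p^v)}{p^{vs}}$ converges, and that the series $\sum_{p}\sum_{v=1}^{\infty}\frac{g(p^v)}{p^{vs}}$ (over all primes $p$) converges. Define $\widehat{g}:\mathbb{N}\to\mathbb{C}$ by $$\widehat{g}(p^\alpha)=-\frac{g(p^{\alpha-1})}{p^{\alpha s}}+\Big(1-\frac{1}{p^s}\Big)\sum_{v\ge\alpha}\frac{g(p^v)}{p^{vs}}\quad(p\text{ prime},\ \alpha\in\mathbb{N}),$$ $$\widehat{g}(1)=\sum_{p}\widehat{g}(p),\qquad \widehat{g}(n)=0 \text{ if } n>1 \text{ is not a prime power}.$$ Then $g$ has a pointwise convergent Cohen–Ramanujan expansion with these coefficients, i.e. for every $a\in\mathbb{N}$, $$g(a)=\sum_{r=1}^{\infty}\widehat{g}(r)\,c_r^{s}(a^s),$$ the series being convergent.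
   Context: An arithmetical function $g$ is additive if $g(mn)=g(m)+g(n)$ whenever $m,n$ are coprime positive integers. For $s\in\mathbb{N}$ and integers $a,b$, $(a,b)_s$ denotes the largest $d^s$ with $d\in\mathbb{N}$ such that $d^s\mid a$ and $d^s\mid b$. The Cohen–Ramanujan sum is defined for $r,s\in\mathbb{N}$ and $n\in\mathbb{Z}$ by $$c_r^{s}(n)=\sum_{\substack{h=1\\ (h,r^s)_s=1}}^{r^s} e^{2\pi i n h/r^s}.$$ *)

theory Defs
  imports "HOL-Analysis.Analysis" "HOL-Computational_Algebra.Primes"
begin

definition additive :: "(nat \<Rightarrow> complex) \<Rightarrow> bool" where
  "additive g \<longleftrightarrow> (\<forall>m n. m > 0 \<longrightarrow> n > 0 \<longrightarrow> coprime m n \<longrightarrow> g (m * n) = g m + g n)"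

definition gcds :: "nat \<Rightarrow> int \<Rightarrow> int \<Rightarrow> int" where
  "gcds s a b = Max {int (d ^ s) | d. d \<ge> 1 \<and> int (d ^ s) dvd a \<and> int (d ^ s) dvd b}"

definition cohen_ramanujan :: "nat \<Rightarrow> nat \<Rightarrow> int \<Rightarrow> complex" where
  "cohen_ramanujan r s n =
     (\<Sum>h \<in> {h \<in> {1..r ^ s}. gcds s (int h) (int (r ^ s)) = 1}.
        exp (2 * of_real pi * \<i> * of_int n * of_nat h / of_nat (r ^ s)))"

definition ghat_pp :: "(nat \<Rightarrow> complex) \<Rightarrow> nat \<Rightarrow> nat \<Rightarrow> nat \<Rightarrow> complex" where
  "ghat_pp g s p \<alpha> =
     - g (p ^ (\<alpha> - 1)) / of_nat p ^ (\<alpha> * s)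
     + (1 - 1 / of_nat p ^ s) * (\<Sum>k. g (p ^ (\<alpha> + k)) / of_nat p ^ ((\<alpha> + k) * s))"

definition ghat :: "(nat \<Rightarrow> complex) \<Rightarrow> nat \<Rightarrow> nat \<Rightarrow> complex" where
  "ghat g s n =
     (if n = 1 then lim (\<lambda>N. \<Sum>p \<in> {p. prime p \<and> p \<le> N}. ghat_pp g s p 1)
      else if (\<exists>p \<alpha>. prime p \<and> \<alpha> \<ge> 1 \<and> n = p ^ \<alpha>)
      then (case (THE (p, \<alpha>). prime p \<and> \<alpha> \<ge> 1 \<and> n = p ^ \<alpha>) of (p, \<alpha>) \<Rightarrow> ghat_pp g s p \<alpha>)
      else 0)"

end

theory Submission
  imports Defs
begin
lemma exp_int_one: "exp (2 * of_real pi * \<i> * of_int m) = 1"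
  by (simp add: exp_eq_1)

lemma root_sum:
  fixes n :: int and M :: nat
  assumes "M > 0"
  shows "(\<Sum>h\<in>{1..M}. exp (2 * of_real pi * \<i> * of_int n * of_nat h / of_nat M))
         = (if int M dvd n then of_nat M else 0)"
proof -
  define w where "w = exp (2 * of_real pi * \<i> * of_int n / of_nat M)"
  have th: "exp (2 * of_real pi * \<i> * of_int n * of_nat h / of_nat M) = w ^ h" for h
    unfolding w_def by (subst exp_of_nat_mult[symmetric]) (simp add: field_simps)
  have sum1: "(\<Sum>h\<in>{1..M}. w ^ h) = (\<Sum>i<M. w ^ Suc i)"
    by (simp add: sum.atLeast1_atMost_eq)
  show ?thesis
  proof (cases "int M dvd n")
    case True
    then obtain q where q: "n = int M * q" by blast
    have "w = 1" unfolding w_def q using assms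
      by (simp add: exp_int_one[of q, symmetric] mult.assoc)
    then show ?thesis using True by (simp add: th)
  next
    case False
    have wM: "w ^ M = 1"
      unfolding w_def using assms
      by (subst exp_of_nat_mult[symmetric]) (simp add: exp_int_one)
    have "w \<noteq> 1"
    proof
      assume "w = 1"
      then obtain k :: int where k: "2 * pi * of_int n / of_nat M = of_int (2 * k) * pi"
        unfolding w_def exp_eq_1 by auto
      then have "of_int n = (of_int (k * int M) :: real)" using assms
        by (simp add: field_simps)
      then have "n = k * int M" by linarith
      then show False using False by simp
    qed
    then have "(\<Sum>i<M. w ^ Suc i) = w * ((w ^ M - 1) / (w - 1))"
      by (simp add: geometric_sum sum_distrib_left[symmetric])
    also have "\<dots> = 0" using wM by simp
    finally show ?thesis using False sum1 by (simp add: th)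
  qed
qed

lemma gcds_pp:
  assumes p: "prime p" and a: "\<alpha> \<ge> 1" and s: "s \<ge> 1" and h: "h \<ge> 1"
  shows "gcds s (int h) (int ((p ^ \<alpha>) ^ s)) = 1 \<longleftrightarrow> \<not> p ^ s dvd h"
proof -
  define S where "S = {int (d ^ s) | d. d \<ge> 1 \<and> int (d ^ s) dvd int h \<and> int (d ^ s) dvd int ((p ^ \<alpha>) ^ s)}"
  have gS: "gcds s (int h) (int ((p ^ \<alpha>) ^ s)) = Max S" unfolding gcds_def S_def ..
  have mem: "x \<in> S \<longleftrightarrow> (\<exists>d. x = int (d ^ s) \<and> d \<ge> 1 \<and> d ^ s dvd h \<and> d dvd p ^ \<alpha>)" for x
    unfolding S_def using s by (auto simp del: of_nat_power simp: of_nat_dvd_iff pow_divides_pow_iff)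
  have fin: "finite S"
  proof (rule finite_subset[of _ "{0..int ((p ^ \<alpha>) ^ s)}"])
    show "S \<subseteq> {0..int ((p ^ \<alpha>) ^ s)}"
    proof
      fix x assume "x \<in> S"
      then obtain d where d: "x = int (d ^ s)" "d \<ge> 1" "d dvd p ^ \<alpha>" using mem by blast
      then have "d ^ s dvd (p ^ \<alpha>) ^ s" by (simp add: dvd_power_same)
      then have "d ^ s \<le> (p ^ \<alpha>) ^ s" using p by (intro dvd_imp_le) (auto simp: prime_gt_0_nat)
      then have "int (d ^ s) \<le> int ((p ^ \<alpha>) ^ s)" by (simp only: of_nat_le_iff)
      then show "x \<in> {0..int ((p ^ \<alpha>) ^ s)}" using d by simp
    qed
  qed simp
  have one: "1 \<in> S" using mem[of 1] by (auto intro: exI[of _ 1])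
  show ?thesis
  proof
    assume g: "gcds s (int h) (int ((p ^ \<alpha>) ^ s)) = 1"
    show "\<not> p ^ s dvd h"
    proof
      assume ps: "p ^ s dvd h"
      have p1: "p \<ge> 1" using prime_gt_0_nat[OF p] by simp
      have "p dvd p ^ \<alpha>" using a by (simp add: dvd_power)
      then have "int (p ^ s) \<in> S" using mem[of "int (p ^ s)"] ps p1 by blast
      then have "int (p ^ s) \<le> Max S" using fin by simp
      moreover have "p ^ s > 1" using p s
        using one_less_power[OF prime_gt_1_nat[OF p], of s] s by simp
      ultimately show False using g gS by linarith
    qed
  next
    assume nps: "\<not> p ^ s dvd h"
    have "S = {1}"
    proof (intro equalityI subsetI)
      fix x assume "x \<in> S"
      then obtain d where d: "x = int (d ^ s)" "d \<ge> 1" "d ^ s dvd h" "d dvd p ^ \<alpha>" using mem by blast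
      then obtain i where i: "i \<le> \<alpha>" "d = p ^ i" using divides_primepow_nat[OF p] by blast
      have "i = 0"
      proof (rule ccontr)
        assume "i \<noteq> 0"
        then have "p ^ s dvd d ^ s" using i by (simp add: dvd_power_same)
        then show False using d(3) nps dvd_trans by blast
      qed
      then show "x \<in> {1}" using d i by simp
    qed (use one in simp)
    then show "gcds s (int h) (int ((p ^ \<alpha>) ^ s)) = 1" using gS by simp
  qed
qed


lemma cr_pp:
  assumes p: "prime p" and a: "\<alpha> \<ge> 1" and s: "s \<ge> 1"
  shows "cohen_ramanujan (p ^ \<alpha>) s n =
    (if int ((p ^ \<alpha>) ^ s) dvd n then of_nat ((p ^ \<alpha>) ^ s) else 0)
    - (if int ((p ^ (\<alpha> - 1)) ^ s) dvd n then of_nat ((p ^ (\<alpha> - 1)) ^ s) else 0)"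
proof -
  define M where "M = (p ^ \<alpha>) ^ s"
  define M' where "M' = (p ^ (\<alpha> - 1)) ^ s"
  define P where "P = p ^ s"
  have p0: "p > 0" using prime_gt_0_nat[OF p] .
  have P0: "P > 0" unfolding P_def using p0 by simp
  have M'0: "M' > 0" unfolding M'_def using p0 by simp
  have MP: "M = P * M'" unfolding M_def M'_def P_def using a
    by (metis Suc_diff_le diff_Suc_1 power_Suc power_mult_distrib mult.commute)
  have M0: "M > 0" using MP P0 M'0 by simp
  define f where "f h = exp (2 * of_real pi * \<i> * of_int n * of_nat h / of_nat M)" for h :: nat
  define A where "A = {h \<in> {1..M}. \<not> P dvd h}"
  define B where "B = {h \<in> {1..M}. P dvd h}"
  have crA: "cohen_ramanujan (p ^ \<alpha>) s n = sum f A"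
    unfolding cohen_ramanujan_def f_def A_def M_def P_def
    by (rule sum.cong) (use gcds_pp[OF p a s] in auto)
  have split: "sum f {1..M} = sum f A + sum f B"
  proof -
    have e: "{1..M} = A \<union> B" and d: "A \<inter> B = {}" unfolding A_def B_def by auto
    have "finite A" "finite B" unfolding A_def B_def by auto
    then show ?thesis unfolding e using d by (rule sum.union_disjoint)
  qed
  have Bimg: "B = (\<lambda>j. P * j) ` {1..M'}"
  proof (intro equalityI subsetI)
    fix h assume "h \<in> B"
    then obtain j where j: "h = P * j" "1 \<le> P * j" "P * j \<le> P * M'" unfolding B_def MP by auto
    then have "1 \<le> j" "j \<le> M'" using P0 by (auto simp: Suc_le_eq)
    then show "h \<in> (\<lambda>j. P * j) ` {1..M'}" using j by auto
  next
    fix h assume "h \<in> (\<lambda>j. P * j) ` {1..M'}"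
    then obtain j where j: "h = P * j" "j \<in> {1..M'}" by (erule imageE)
    then have j: "h = P * j" "1 \<le> j" "j \<le> M'" by auto
    then have "1 \<le> P * j" using P0 by (simp add: Suc_le_eq)
    moreover have "P * j \<le> M" using j MP by simp
    ultimately show "h \<in> B" unfolding B_def using j by auto
  qed
  have "sum f B = (\<Sum>j\<in>{1..M'}. f (P * j))"
    unfolding Bimg using P0 by (subst sum.reindex) (auto simp: inj_on_def)
  also have "\<dots> = (\<Sum>j\<in>{1..M'}. exp (2 * of_real pi * \<i> * of_int n * of_nat j / of_nat M'))"
  proof (intro sum.cong refl)
    fix j
    have "(2 * of_real pi * \<i> * of_int n) * of_nat (P * j) / of_nat (P * M') =
          (2 * of_real pi * \<i> * of_int n) * (of_nat j :: complex) / of_nat M'"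
      using P0 by (simp add: divide_simps)
    then show "f (P * j) = exp (2 * of_real pi * \<i> * of_int n * of_nat j / of_nat M')"
      unfolding f_def MP by simp
  qed
  also have "\<dots> = (if int M' dvd n then of_nat M' else 0)" by (rule root_sum[OF M'0])
  finally have sB: "sum f B = (if int M' dvd n then of_nat M' else 0)" .
  have sM: "sum f {1..M} = (if int M dvd n then of_nat M else 0)"
    unfolding f_def by (rule root_sum[OF M0])
  have "sum f A = sum f {1..M} - sum f B" using split by simp
  then show ?thesis using crA sB sM unfolding M_def M'_def by simp
qed


lemma abel_test:
  fixes u :: "nat \<Rightarrow> complex" and b :: "nat \<Rightarrow> real"
  assumes su: "summable u" and db: "decseq b" and b0: "\<And>n. b n \<ge> 0"
  shows "summable (\<lambda>n. u n * of_real (b n))"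
proof -
  define \<rho> where "\<rho> n = (\<Sum>k. u (k + n))" for n
  have sr: "summable (\<lambda>k. u (k + n))" for n using su by (rule summable_ignore_initial_segment)
  have rec: "\<rho> n = u n + \<rho> (Suc n)" for n
    unfolding \<rho>_def using suminf_split_head[OF sr[of n]] by (simp add: add.commute add_Suc_right)
  have \<rho>eq: "\<rho> n = suminf u - sum u {..<n}" for n
    unfolding \<rho>_def using suminf_minus_initial_segment[OF su] by simp
  have \<rho>0: "\<rho> \<longlonglongrightarrow> 0"
  proof -
    have "(\<lambda>n. suminf u - sum u {..<n}) \<longlonglongrightarrow> suminf u - suminf u"
      by (intro tendsto_intros summable_LIMSEQ su)
    then show ?thesis unfolding \<rho>eq by simp
  qed
  obtain L where bL: "b \<longlonglongrightarrow> L" using decseq_convergent[of b 0] db b0 by blast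
  have \<rho>b0: "(\<lambda>n. \<rho> n * of_real (b n)) \<longlonglongrightarrow> 0 * of_real L"
    by (intro tendsto_intros \<rho>0 bL)
  have s1: "summable (\<lambda>n. \<rho> n * of_real (b n) - \<rho> (Suc n) * of_real (b (Suc n)))"
    using telescope_summable'[OF \<rho>b0] .
  have "Bseq \<rho>" using \<rho>0 by (rule convergent_imp_Bseq[OF convergentI])
  then obtain C where C: "C > 0" "\<And>n. norm (\<rho> n) \<le> C" by (auto simp: Bseq_def)
  have s2: "summable (\<lambda>n. \<rho> (Suc n) * of_real (b (Suc n) - b n))"
  proof (rule summable_comparison_test')
    show "summable (\<lambda>n. C * (b n - b (Suc n)))"
      by (intro summable_mult telescope_summable'[OF bL])
    fix n
    have "b (Suc n) \<le> b n" using db by (simp add: decseq_Suc_iff)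
    then have "norm (\<rho> (Suc n) * of_real (b (Suc n) - b n)) = norm (\<rho> (Suc n)) * (b n - b (Suc n))"
      by (simp add: norm_mult del: of_real_diff)
    also have "\<dots> \<le> C * (b n - b (Suc n))"
      using C(2)[of "Suc n"] \<open>b (Suc n) \<le> b n\<close> by (intro mult_right_mono) auto
    finally show "norm (\<rho> (Suc n) * of_real (b (Suc n) - b n)) \<le> C * (b n - b (Suc n))" .
  qed
  have eq: "u n * of_real (b n) = (\<rho> n * of_real (b n) - \<rho> (Suc n) * of_real (b (Suc n)))
        + \<rho> (Suc n) * of_real (b (Suc n) - b n)" for n
    using rec[of n] by (simp add: algebra_simps)
  show ?thesis unfolding eq by (intro summable_add s1 s2)
qed

lemma additive_1: "additive g \<Longrightarrow> g 1 = 0"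
  unfolding additive_def by (metis add_cancel_right_right coprime_1_left mult_1 zero_less_one)

lemma additive_prod:
  assumes ad: "additive g" and fin: "finite S" and pr: "\<And>p. p \<in> S \<Longrightarrow> prime p"
  shows "g (\<Prod>p\<in>S. p ^ e p) = (\<Sum>p\<in>S. g (p ^ e p))"
  using fin pr
proof (induction S rule: finite_induct)
  case empty
  then show ?case using additive_1[OF ad] by simp
next
  case (insert q S)
  have cop: "coprime (q ^ e q) (\<Prod>p\<in>S. p ^ e p)"
  proof (intro coprime_power_left_iff[THEN iffD2] prod_coprime_right coprime_power_right_iff[THEN iffD2] disjI1)
    fix p assume "p \<in> S"
    then show "coprime q p" using insert by (metis insertCI primes_coprime)
  qed
  have pos1: "q ^ e q > 0" using insert prime_gt_0_nat by simp
  have pos2: "(\<Prod>p\<in>S. p ^ e p) > 0" using insert prime_gt_0_nat by (intro prod_pos) simp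
  show ?case using insert ad cop pos1 pos2 unfolding additive_def by simp
qed

lemma additive_factor:
  assumes ad: "additive g" and a: "a > 0"
  shows "g a = (\<Sum>p\<in>prime_factors a. g (p ^ multiplicity p a))"
proof -
  have "g a = g (\<Prod>p\<in>prime_factors a. p ^ multiplicity p a)"
    using prime_factorization_nat[OF a] by simp
  also have "\<dots> = (\<Sum>p\<in>prime_factors a. g (p ^ multiplicity p a))"
    by (rule additive_prod[OF ad]) auto
  finally show ?thesis .
qed


lemma ofpow: "(of_nat ((p ^ a) ^ s) :: complex) = (of_nat p ^ s) ^ a"
  by (simp add: power_mult[symmetric] mult.commute)

lemma ofpow2: "(of_nat p ^ (a * s) :: complex) = (of_nat p ^ s) ^ a"
  by (simp add: power_mult[symmetric] mult.commute)

lemma ghat_step: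
  fixes g :: "nat \<Rightarrow> complex"
  assumes p: "prime p"
    and sm: "summable (\<lambda>v. g (p ^ Suc v) / of_nat p ^ (Suc v * s))"
  shows "ghat_pp g s p (Suc k) - ghat_pp g s p (Suc (Suc k))
       = (g (p ^ Suc k) - g (p ^ k)) / (of_nat p ^ s) ^ Suc k"
proof -
  define t where "t v = g (p ^ v) / of_nat p ^ (v * s)" for v
  define q :: complex where "q = of_nat p ^ s"
  have q0: "q \<noteq> 0" unfolding q_def using prime_gt_0_nat[OF p] by simp
  have sm': "summable (\<lambda>j. t (Suc k + j))"
  proof -
    have "summable (\<lambda>v. t (Suc (v + k)))"
      using summable_ignore_initial_segment[OF sm, of k] unfolding t_def by simp
    then show ?thesis by (simp add: add.commute)
  qed
  have T: "(\<Sum>j. t (Suc k + j)) = t (Suc k) + (\<Sum>j. t (Suc (Suc k) + j))"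
    using suminf_split_head[OF sm'] by simp
  have G1: "ghat_pp g s p (Suc k) = - g (p ^ k) / q ^ Suc k + (1 - 1 / q) * (\<Sum>j. t (Suc k + j))"
    unfolding ghat_pp_def t_def q_def ofpow2 by simp
  have G2: "ghat_pp g s p (Suc (Suc k)) = - g (p ^ Suc k) / q ^ Suc (Suc k) + (1 - 1 / q) * (\<Sum>j. t (Suc (Suc k) + j))"
    unfolding ghat_pp_def t_def q_def ofpow2 by simp
  have tk: "t (Suc k) = g (p ^ Suc k) / q ^ Suc k" unfolding t_def q_def ofpow2 ..
  show ?thesis unfolding G1 G2 T tk q_def[symmetric] using q0
    by (simp add: field_simps)
qed

lemma tele:
  fixes g :: "nat \<Rightarrow> complex"
  assumes p: "prime p" and g1: "g 1 = 0"
    and sm: "summable (\<lambda>v. g (p ^ Suc v) / of_nat p ^ (Suc v * s))"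
  shows "(\<Sum>\<alpha>\<in>{1..Suc k}. ghat_pp g s p \<alpha> *
           ((if \<alpha> \<le> k then of_nat ((p ^ \<alpha>) ^ s) else 0) - of_nat ((p ^ (\<alpha> - 1)) ^ s)))
         = g (p ^ k) - ghat_pp g s p 1"
proof -
  define q :: complex where "q = of_nat p ^ s"
  define G where "G = ghat_pp g s p"
  have q0: "q \<noteq> 0" unfolding q_def using prime_gt_0_nat[OF p] by simp
  have Q: "(\<Sum>\<alpha>\<in>{1..k}. G \<alpha> * (q ^ \<alpha> - q ^ (\<alpha> - 1))) - G (Suc k) * q ^ k = g (p ^ k) - G 1" for k
  proof (induction k)
    case 0
    then show ?case using g1 by simp
  next
    case (Suc k)
    have st: "G (Suc k) - G (Suc (Suc k)) = (g (p ^ Suc k) - g (p ^ k)) / q ^ Suc k"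
      unfolding G_def q_def by (rule ghat_step[OF p sm])
    have "(\<Sum>\<alpha>\<in>{1..Suc k}. G \<alpha> * (q ^ \<alpha> - q ^ (\<alpha> - 1))) - G (Suc (Suc k)) * q ^ Suc k
       = ((\<Sum>\<alpha>\<in>{1..k}. G \<alpha> * (q ^ \<alpha> - q ^ (\<alpha> - 1))) - G (Suc k) * q ^ k)
         + q ^ Suc k * (G (Suc k) - G (Suc (Suc k)))"
      by (simp add: algebra_simps)
    also have "\<dots> = g (p ^ Suc k) - G 1" unfolding Suc.IH st using q0
      by (simp add: field_simps)
    finally show ?case .
  qed
  have "(\<Sum>\<alpha>\<in>{1..Suc k}. ghat_pp g s p \<alpha> *
           ((if \<alpha> \<le> k then of_nat ((p ^ \<alpha>) ^ s) else 0) - of_nat ((p ^ (\<alpha> - 1)) ^ s)))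
      = (\<Sum>\<alpha>\<in>{1..Suc k}. G \<alpha> * ((if \<alpha> \<le> k then q ^ \<alpha> else 0) - q ^ (\<alpha> - 1)))"
    unfolding G_def q_def ofpow ..
  also have "\<dots> = (\<Sum>\<alpha>\<in>{1..k}. G \<alpha> * ((if \<alpha> \<le> k then q ^ \<alpha> else 0) - q ^ (\<alpha> - 1))) - G (Suc k) * q ^ k"
    by simp
  also have "(\<Sum>\<alpha>\<in>{1..k}. G \<alpha> * ((if \<alpha> \<le> k then q ^ \<alpha> else 0) - q ^ (\<alpha> - 1)))
      = (\<Sum>\<alpha>\<in>{1..k}. G \<alpha> * (q ^ \<alpha> - q ^ (\<alpha> - 1)))"
    by (intro sum.cong) auto
  finally show ?thesis using Q[of k] unfolding G_def by simp
qed


lemma cr_one: "cohen_ramanujan 1 s n = 1"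
proof -
  have S: "{int (d ^ s) | d. d \<ge> 1 \<and> int (d ^ s) dvd int 1 \<and> int (d ^ s) dvd int (1 ^ s)} = {1}"
  proof (intro equalityI subsetI)
    fix x assume "x \<in> {int (d ^ s) | d. d \<ge> 1 \<and> int (d ^ s) dvd int 1 \<and> int (d ^ s) dvd int (1 ^ s)}"
    then obtain d where "x = int (d ^ s)" "int (d ^ s) dvd 1" by auto
    then show "x \<in> {1}" by (simp del: of_nat_power)
  next
    fix x assume "x \<in> {1::int}"
    then show "x \<in> {int (d ^ s) | d. d \<ge> 1 \<and> int (d ^ s) dvd int 1 \<and> int (d ^ s) dvd int (1 ^ s)}"
      by (auto intro!: exI[of _ 1])
  qed
  have "gcds s (int 1) (int (1 ^ s)) = Max {int (d ^ s) | d. d \<ge> 1 \<and> int (d ^ s) dvd int 1 \<and> int (d ^ s) dvd int (1 ^ s)}"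
    unfolding gcds_def ..
  then have g: "gcds s (int 1) (int (1 ^ s)) = 1" unfolding S by simp
  have "{h \<in> {1..1 ^ s}. gcds s (int h) (int (1 ^ s)) = 1} = {1}" using g by auto
  then show ?thesis unfolding cohen_ramanujan_def
    using exp_int_one[of n] by (simp add: mult.assoc)
qed

lemma ghat_pp_eq:
  assumes p: "prime p" and a: "\<alpha> \<ge> 1"
  shows "ghat g s (p ^ \<alpha>) = ghat_pp g s p \<alpha>"
proof -
  have ne: "p ^ \<alpha> \<noteq> 1" using p a prime_gt_1_nat[OF p] by simp
  have th: "(THE (q, \<beta>). prime q \<and> \<beta> \<ge> 1 \<and> p ^ \<alpha> = q ^ \<beta>) = (p, \<alpha>)"
  proof (rule the_equality)
    show "case (p, \<alpha>) of (q, \<beta>) \<Rightarrow> prime q \<and> \<beta> \<ge> 1 \<and> p ^ \<alpha> = q ^ \<beta>" using p a by simp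
  next
    fix x assume "case x of (q, \<beta>) \<Rightarrow> prime q \<and> \<beta> \<ge> 1 \<and> p ^ \<alpha> = q ^ \<beta>"
    then obtain q \<beta> where x: "x = (q, \<beta>)" "prime q" "\<beta> \<ge> 1" "p ^ \<alpha> = q ^ \<beta>" by (cases x) auto
    then show "x = (p, \<alpha>)" using prime_power_inj'[OF p x(2) x(4)] a by auto
  qed
  have ex: "\<exists>q \<beta>. prime q \<and> \<beta> \<ge> 1 \<and> p ^ \<alpha> = q ^ \<beta>" using p a by blast
  show ?thesis unfolding ghat_def using ne ex th by simp
qed

lemma ghat_zero:
  assumes "n \<noteq> 1" "\<not> (\<exists>p \<alpha>. prime p \<and> \<alpha> \<ge> 1 \<and> n = p ^ \<alpha>)"
  shows "ghat g s n = 0"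
  using assms unfolding ghat_def by auto

lemma dvd_pow_mult:
  assumes p: "prime p" and a: "a > 0" and s: "s \<ge> 1"
  shows "int ((p ^ \<alpha>) ^ s) dvd int (a ^ s) \<longleftrightarrow> \<alpha> \<le> multiplicity p a"
proof -
  have "int ((p ^ \<alpha>) ^ s) dvd int (a ^ s) \<longleftrightarrow> (p ^ \<alpha>) ^ s dvd a ^ s" by (rule int_dvd_int_iff)
  also have "\<dots> \<longleftrightarrow> p ^ \<alpha> dvd a" using s by (simp add: pow_divides_pow_iff)
  also have "\<dots> \<longleftrightarrow> \<alpha> \<le> multiplicity p a" using a p by (intro power_dvd_iff_le_multiplicity) auto
  finally show ?thesis .
qed

lemma cr_pp_a:
  assumes p: "prime p" and al: "\<alpha> \<ge> 1" and s: "s \<ge> 1" and a: "a > 0"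
  shows "cohen_ramanujan (p ^ \<alpha>) s (int (a ^ s)) =
    (if \<alpha> \<le> multiplicity p a then of_nat ((p ^ \<alpha>) ^ s) else 0)
    - (if \<alpha> - 1 \<le> multiplicity p a then of_nat ((p ^ (\<alpha> - 1)) ^ s) else 0)"
  unfolding cr_pp[OF p al s] dvd_pow_mult[OF p a s] ..


theorem mainTheorem4:
  fixes g :: "nat \<Rightarrow> complex" and s :: nat
  assumes "s \<ge> 1"
    and "additive g"
    and "\<And>p. prime p \<Longrightarrow> summable (\<lambda>v. g (p ^ Suc v) / of_nat p ^ (Suc v * s))"
    and "convergent (\<lambda>N. \<Sum>p \<in> {p. prime p \<and> p \<le> N}.
                         \<Sum>v. g (p ^ Suc v) / of_nat p ^ (Suc v * s))"
  shows "\<forall>a \<ge> 1. (\<lambda>R. \<Sum>r = 1..R. ghat g s r * cohen_ramanujan r s (int (a ^ s)))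
                   \<longlonglongrightarrow> g a"
proof (intro allI impI)
  fix a :: nat assume a1: "a \<ge> 1"
  have a0: "a > 0" using a1 by simp
  have s1: "s \<ge> 1" by fact
  note g1 = additive_1[OF assms(2)]
  define S where "S p = (\<Sum>v. g (p ^ Suc v) / of_nat p ^ (Suc v * s))" for p
  define A where "A N = {p. prime p \<and> p \<le> N}" for N :: nat
  have finA: "finite (A N)" for N unfolding A_def by (rule finite_subset[of _ "{..N}"]) auto
  define c where "c r = cohen_ramanujan r s (int (a ^ s))" for r
  define F where "F r = ghat g s r * c r" for r
  define L where "L = ghat g s 1"
  define u where "u n = (if prime n then S n else 0)" for n
  have u_sum: "sum u {..N} = (\<Sum>p\<in>A N. S p)" for N
    unfolding u_def A_def by (rule sum.mono_neutral_cong_right) auto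
  have su: "summable u" unfolding summable_iff_convergent' u_sum A_def S_def using assms(4) .
  define b where "b n = 1 / real (max n 1) ^ s" for n
  have db: "decseq b" unfolding decseq_def b_def
    by (auto intro!: divide_left_mono power_mono mult_pos_pos simp: max_def)
  have b0: "b n \<ge> 0" for n unfolding b_def by simp
  have sub: "summable (\<lambda>n. u n * of_real (b n))" by (rule abel_test[OF su db b0])
  define w where "w n = (if prime n then ghat_pp g s n 1 else 0)" for n
  have w_eq: "w n = u n - u n * of_real (b n)" for n
  proof (cases "prime n")
    case True
    then have "max n 1 = n" using prime_gt_1_nat[OF True] by simp
    then show ?thesis using True unfolding w_def u_def b_def S_def ghat_pp_def
      using g1 by (simp add: algebra_simps)
  qed (simp add: w_def u_def)
  have sw: "summable w" unfolding w_eq by (intro summable_diff su sub)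
  have w_sum: "sum w {..N} = (\<Sum>p\<in>A N. ghat_pp g s p 1)" for N
    unfolding w_def A_def by (rule sum.mono_neutral_cong_right) auto
  have wlim: "(\<lambda>N. \<Sum>p\<in>A N. ghat_pp g s p 1) \<longlonglongrightarrow> suminf w"
    using summable_LIMSEQ'[OF sw] unfolding w_sum .
  have Lw: "L = suminf w" unfolding L_def ghat_def using wlim unfolding A_def
    by (simp add: limI)
  have key: "(\<Sum>r=1..R. F r) = L + g a - (\<Sum>p\<in>A R. ghat_pp g s p 1)" if R: "R \<ge> a * a" for R
  proof -
    have "1 * 1 \<le> a * a" using a1 by (intro mult_le_mono) auto
    then have R1: "R \<ge> 1" using R by linarith
    have "a * 1 \<le> a * a" using a1 by (intro mult_le_mono) auto
    then have aR: "a \<le> R" using R by linarith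
    have e1: "(\<Sum>r=1..R. F r) = F 1 + (\<Sum>r=2..R. F r)"
      using sum.atLeast_Suc_atMost[OF R1, of F] by (simp add: numeral_2_eq_2)
    have F1: "F 1 = L" unfolding F_def c_def L_def cr_one by simp
    define PP where "PP = {r \<in> {2..R}. \<exists>p \<alpha>. prime p \<and> \<alpha> \<ge> 1 \<and> r = p ^ \<alpha>}"
    have e2: "(\<Sum>r=2..R. F r) = sum F PP"
    proof (rule sum.mono_neutral_right)
      show "\<forall>i\<in>{2..R} - PP. F i = 0"
      proof
        fix i assume "i \<in> {2..R} - PP"
        then have "i \<noteq> 1" "\<not> (\<exists>p \<alpha>. prime p \<and> \<alpha> \<ge> 1 \<and> i = p ^ \<alpha>)" unfolding PP_def by auto
        then show "F i = 0" unfolding F_def using ghat_zero by simp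
      qed
    qed (auto simp: PP_def)
    define B where "B p = {\<alpha> \<in> {1..R}. p ^ \<alpha> \<le> R}" for p
    define Sig where "Sig = Sigma (A R) B"
    have PPimg: "PP = (\<lambda>(p, \<alpha>). p ^ \<alpha>) ` Sig"
    proof (intro equalityI subsetI)
      fix r assume "r \<in> PP"
      then obtain p \<alpha> where r: "prime p" "\<alpha> \<ge> 1" "r = p ^ \<alpha>" "r \<le> R" unfolding PP_def by auto
      have p1: "p \<ge> 1" using prime_gt_1_nat[OF r(1)] by simp
      have "p \<le> p ^ \<alpha>" using p1 r(2) by (intro self_le_power) auto
      moreover have "\<alpha> \<le> p ^ \<alpha>"
      proof -
        have "\<alpha> < 2 ^ \<alpha>" by (rule less_exp)
        also have "(2::nat) ^ \<alpha> \<le> p ^ \<alpha>" using prime_ge_2_nat[OF r(1)] by (intro power_mono) auto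
        finally show ?thesis by simp
      qed
      ultimately have "(p, \<alpha>) \<in> Sig" unfolding Sig_def A_def B_def using r by auto
      then show "r \<in> (\<lambda>(p, \<alpha>). p ^ \<alpha>) ` Sig" using r by force
    next
      fix r assume "r \<in> (\<lambda>(p, \<alpha>). p ^ \<alpha>) ` Sig"
      then obtain p \<alpha> where r: "(p, \<alpha>) \<in> Sig" "r = p ^ \<alpha>" by auto
      then have pr: "prime p" "\<alpha> \<ge> 1" "p ^ \<alpha> \<le> R" unfolding Sig_def A_def B_def by auto
      have "2 \<le> p" using prime_ge_2_nat[OF pr(1)] .
      also have "p \<le> p ^ \<alpha>" using pr prime_gt_1_nat[OF pr(1)] by (intro self_le_power) auto
      finally show "r \<in> PP" unfolding PP_def using pr r by auto
    qed
    have inj: "inj_on (\<lambda>(p, \<alpha>). p ^ \<alpha>) Sig"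
    proof (rule inj_onI)
      fix x y assume x: "x \<in> Sig" and y: "y \<in> Sig" and e: "(case x of (p, \<alpha>) \<Rightarrow> p ^ \<alpha>) = (case y of (p, \<alpha>) \<Rightarrow> p ^ \<alpha>)"
      obtain p \<alpha> where xx: "x = (p, \<alpha>)" by (cases x)
      obtain q \<beta> where yy: "y = (q, \<beta>)" by (cases y)
      have "prime p" "\<alpha> \<ge> 1" using x unfolding xx Sig_def A_def B_def by auto
      moreover have "prime q" "\<beta> \<ge> 1" using y unfolding yy Sig_def A_def B_def by auto
      moreover have "p ^ \<alpha> = q ^ \<beta>" using e xx yy by simp
      ultimately show "x = y" using prime_power_inj' xx yy by (metis One_nat_def less_eq_Suc_le)
    qed
    have finB: "finite (B p)" for p unfolding B_def by auto
    have e3: "sum F PP = (\<Sum>p\<in>A R. \<Sum>\<alpha>\<in>B p. F (p ^ \<alpha>))"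
    proof -
      have "sum F PP = sum (F \<circ> (\<lambda>(p, \<alpha>). p ^ \<alpha>)) Sig" unfolding PPimg by (rule sum.reindex[OF inj])
      also have "\<dots> = (\<Sum>(p, \<alpha>)\<in>Sig. F (p ^ \<alpha>))" by (rule sum.cong) auto
      also have "\<dots> = (\<Sum>p\<in>A R. \<Sum>\<alpha>\<in>B p. F (p ^ \<alpha>))" unfolding Sig_def
        by (rule sum.Sigma[symmetric, OF finA]) (simp add: finB)
      finally show ?thesis .
    qed
    have e4: "(\<Sum>\<alpha>\<in>B p. F (p ^ \<alpha>)) = g (p ^ multiplicity p a) - ghat_pp g s p 1" if pA: "p \<in> A R" for p
    proof -
      define k where "k = multiplicity p a"
      have p: "prime p" "p \<le> R" using pA unfolding A_def by auto
      have pk: "p ^ Suc k \<le> R"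
      proof (cases "k = 0")
        case True then show ?thesis using p by simp
      next
        case False
        then have "p dvd a" unfolding k_def using not_dvd_imp_multiplicity_0[of p a] by auto
        then have "p \<le> a" using a0 by (simp add: dvd_imp_le)
        moreover have "p ^ k \<le> a" unfolding k_def using a0 by (intro dvd_imp_le multiplicity_dvd) auto
        ultimately have "p * p ^ k \<le> a * a" by (rule mult_le_mono)
        then show ?thesis using R by simp
      qed
      have sk: "Suc k \<le> R"
      proof -
        have "Suc k < 2 ^ Suc k" by (rule less_exp)
        also have "(2::nat) ^ Suc k \<le> p ^ Suc k" using prime_ge_2_nat[OF p(1)] by (intro power_mono) auto
        finally show ?thesis using pk by simp
      qed
      have sub1: "{1..Suc k} \<subseteq> B p"
      proof
        fix \<alpha> assume al: "\<alpha> \<in> {1..Suc k}"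
        then have "\<alpha> \<le> Suc k" by simp
        then have "p ^ \<alpha> \<le> p ^ Suc k" using prime_gt_0_nat[OF p(1)] by (intro power_increasing) auto
        then have "p ^ \<alpha> \<le> R" using pk by linarith
        moreover have "\<alpha> \<in> {1..R}" using al sk by simp
        ultimately show "\<alpha> \<in> B p" unfolding B_def by simp
      qed
      have Fpa: "F (p ^ \<alpha>) = ghat_pp g s p \<alpha> *
          ((if \<alpha> \<le> k then of_nat ((p ^ \<alpha>) ^ s) else 0)
           - (if \<alpha> - 1 \<le> k then of_nat ((p ^ (\<alpha> - 1)) ^ s) else 0))" if "\<alpha> \<ge> 1" for \<alpha>
        unfolding F_def c_def k_def using ghat_pp_eq[OF p(1) that] cr_pp_a[OF p(1) that s1 a0] by simp
      have "(\<Sum>\<alpha>\<in>B p. F (p ^ \<alpha>)) = (\<Sum>\<alpha>\<in>{1..Suc k}. F (p ^ \<alpha>))"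
      proof (rule sum.mono_neutral_right[OF finB sub1])
        show "\<forall>i\<in>B p - {1..Suc k}. F (p ^ i) = 0"
        proof
          fix i assume "i \<in> B p - {1..Suc k}"
          then have "i \<ge> 1" "i > Suc k" unfolding B_def by auto
          then show "F (p ^ i) = 0" using Fpa[of i] by simp
        qed
      qed
      also have "\<dots> = (\<Sum>\<alpha>\<in>{1..Suc k}. ghat_pp g s p \<alpha> *
           ((if \<alpha> \<le> k then of_nat ((p ^ \<alpha>) ^ s) else 0) - of_nat ((p ^ (\<alpha> - 1)) ^ s)))"
        by (intro sum.cong refl) (auto simp: Fpa)
      also have "\<dots> = g (p ^ k) - ghat_pp g s p 1"
        by (rule tele[OF p(1) g1 assms(3)[OF p(1)]])
      finally show ?thesis unfolding k_def .
    qed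
    have e5: "(\<Sum>p\<in>A R. g (p ^ multiplicity p a)) = g a"
    proof -
      have "(\<Sum>p\<in>A R. g (p ^ multiplicity p a)) = (\<Sum>p\<in>prime_factors a. g (p ^ multiplicity p a))"
      proof (rule sum.mono_neutral_right[OF finA])
        show "prime_factors a \<subseteq> A R" unfolding A_def using aR a0
          by (auto dest: in_prime_factors_imp_prime intro: le_trans[OF dvd_imp_le] simp: in_prime_factors_iff)
        show "\<forall>i\<in>A R - prime_factors a. g (i ^ multiplicity i a) = 0"
          unfolding A_def using a0 g1 by (auto simp: in_prime_factors_iff not_dvd_imp_multiplicity_0)
      qed
      also have "\<dots> = g a" using additive_factor[OF assms(2) a0] by simp
      finally show ?thesis .
    qed
    have "(\<Sum>p\<in>A R. \<Sum>\<alpha>\<in>B p. F (p ^ \<alpha>)) = (\<Sum>p\<in>A R. g (p ^ multiplicity p a) - ghat_pp g s p 1)"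
      by (rule sum.cong[OF refl]) (rule e4)
    then have "(\<Sum>r=1..R. F r) = L + (\<Sum>p\<in>A R. g (p ^ multiplicity p a) - ghat_pp g s p 1)"
      unfolding e1 F1 e2 e3 by simp
    also have "\<dots> = L + g a - (\<Sum>p\<in>A R. ghat_pp g s p 1)"
      using e5 by (simp add: sum_subtractf)
    finally show ?thesis .
  qed
  have ev: "\<forall>\<^sub>F R in sequentially. (\<Sum>r=1..R. F r) = L + g a - (\<Sum>p\<in>A R. ghat_pp g s p 1)"
    by (rule eventually_sequentiallyI[of "a * a"]) (rule key)
  have "(\<lambda>R. L + g a - (\<Sum>p\<in>A R. ghat_pp g s p 1)) \<longlonglongrightarrow> L + g a - suminf w"
    by (intro tendsto_intros wlim)
  then have lim2: "(\<lambda>R. L + g a - (\<Sum>p\<in>A R. ghat_pp g s p 1)) \<longlonglongrightarrow> g a" using Lw by simp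
  have "(\<lambda>R. \<Sum>r=1..R. F r) \<longlonglongrightarrow> g a" by (subst tendsto_cong[OF ev]) (rule lim2)
  then show "(\<lambda>R. \<Sum>r = 1..R. ghat g s r * cohen_ramanujan r s (int (a ^ s))) \<longlonglongrightarrow> g a"
    unfolding F_def c_def .
qed


end
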